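(* Let $X$ be a metric space and let $F: X \Rightarrow \mathbb{R}^m$ be a (total) multi-valued function such that $F(x)$ is closed for every $x \in X$. Then: (a) the set of points of continuity of $F$ is a $\Sigma^0_3$ subset of $X$; (b) if moreover $F(x)$ is bounded for every $x\in X$, then the set of points of continuity of $F$ is a $\Pi^0_2$ subset of $X$.
   Context: A multi-valued function $F: X \Rightarrow Y$ assigns to each $x$ a set $F(x)\subseteq Y$; all multi-valued functions are total ($F(x)\ne\emptyset$). For metric spaces $(X,p),(Y,d)$, $F$ is continuous at $x$ if there is some $y \in F(x)$ such that for every $\varepsilon>0$ there is $\delta>0$ such that for every $x' \in B_p(x,\delta)$ there is $y' \in F(x')$ with $d(y,y')<\varepsilon$. $\mathbb{R}^m$ carries its usual metric. Borel hierarchy: $\Sigma^0_1$ = open; $\Sigma^0_{n+1}$ = countable unions of sets whose complements are $\Sigma^0_k$ for some $k\le n$; $\Pi^0_n$ = complements of $\Sigma^0_n$ sets ($\Pi^0_2 = G_\delta$, $\Sigma^0_3$ = countable unions of $G_\delta$ sets). *)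

theory Defs
  imports "HOL-Analysis.Analysis"
begin

text \<open>Multi-valued functions F :: 'a => 'b set; totality is an explicit hypothesis.
  Continuity at a point, as in the paper.\<close>
definition mv_continuous_at :: "('a::metric_space \<Rightarrow> 'b::metric_space set) \<Rightarrow> 'a \<Rightarrow> bool" where
  "mv_continuous_at F x \<longleftrightarrow>
     (\<exists>y\<in>F x. \<forall>\<epsilon>>0. \<exists>\<delta>>0. \<forall>x'\<in>ball x \<delta>. \<exists>y'\<in>F x'. dist y y' < \<epsilon>)"

text \<open>Borel hierarchy: sigma0 1 = open sets; sigma0 (n+1) = countable unions of sets
  whose complements are in sigma0 k for some 1 <= k <= n. (sigma0 0 is unused, empty.)\<close>
fun sigma0 :: "nat \<Rightarrow> 'a::topological_space set set" where
  "sigma0 0 = {}"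
| "sigma0 (Suc n) =
     (if n = 0 then {S. open S}
      else {\<Union>\<U> | \<U>. countable \<U> \<and> (\<forall>A\<in>\<U>. \<exists>k\<in>{1..n}. - A \<in> sigma0 k)})"

definition pi0 :: "nat \<Rightarrow> 'a::topological_space set set" where
  "pi0 n = {S. - S \<in> sigma0 n}"

end

theory Submission
  imports Defs
begin

definition apU :: "('a::metric_space \<Rightarrow> 'b::metric_space set) \<Rightarrow> 'b set \<Rightarrow> nat \<Rightarrow> 'a set" where
  "apU F B n = {x. \<exists>y\<in>B. \<exists>\<delta>>0. \<forall>x'\<in>ball x \<delta>. \<exists>y'\<in>F x'. dist y y' < inverse (real (Suc n))}"

lemma apU_open: "open (apU F B n)"
  unfolding open_contains_ball
proof
  fix x assume "x \<in> apU F B n"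
  then obtain y \<delta> where y: "y \<in> B" "\<delta> > 0"
    and h: "\<forall>x'\<in>ball x \<delta>. \<exists>y'\<in>F x'. dist y y' < inverse (real (Suc n))"
    unfolding apU_def by blast
  have "ball x \<delta> \<subseteq> apU F B n"
  proof
    fix u assume u: "u \<in> ball x \<delta>"
    have "ball u (\<delta> - dist x u) \<subseteq> ball x \<delta>"
    proof
      fix v assume "v \<in> ball u (\<delta> - dist x u)"
      then show "v \<in> ball x \<delta>" using dist_triangle[of x v u] by simp
    qed
    moreover have "\<delta> - dist x u > 0" using u by simp
    ultimately show "u \<in> apU F B n" unfolding apU_def using y h by blast
  qed
  then show "\<exists>e>0. ball x e \<subseteq> apU F B n" using y by blast
qed

lemma cont_sub_apU:
  assumes "mv_continuous_at F x" and "\<And>y. y \<in> F x \<Longrightarrow> y \<in> B"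
  shows "x \<in> apU F B n"
proof -
  obtain y where y: "y \<in> F x" and h: "\<forall>\<epsilon>>0. \<exists>\<delta>>0. \<forall>x'\<in>ball x \<delta>. \<exists>y'\<in>F x'. dist y y' < \<epsilon>"
    using assms(1) unfolding mv_continuous_at_def by blast
  have "inverse (real (Suc n)) > 0" by simp
  then show ?thesis using h y assms(2) unfolding apU_def by blast
qed

lemma core:
  fixes F :: "'a::metric_space \<Rightarrow> (real^'m) set" and y :: "nat \<Rightarrow> real^'m"
  assumes h: "\<And>n. \<exists>\<delta>>0. \<forall>x'\<in>ball x \<delta>. \<exists>y'\<in>F x'. dist (y n) y' < inverse (real (Suc n))"
    and bd: "bounded (range y)" and cl: "closed (F x)"
  shows "mv_continuous_at F x"
proof -
  obtain l r where r: "strict_mono r" and lim: "(y \<circ> r) \<longlonglongrightarrow> l"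
    using bounded_imp_convergent_subsequence[OF bd] by blast
  have key: "\<exists>n. dist (y n) l < e/2 \<and> inverse (real (Suc n)) < e/2" if e: "e > 0" for e
  proof -
    obtain no where no: "\<forall>n\<ge>no. dist ((y \<circ> r) n) l < e/2"
      using lim e unfolding lim_sequentially by (meson half_gt_zero)
    obtain N where N: "inverse (real (Suc N)) < e/2" using reals_Archimedean e
      by (meson half_gt_zero)
    let ?n = "max no N"
    have "r ?n \<ge> ?n" using r seq_suble by blast
    hence "inverse (real (Suc (r ?n))) \<le> inverse (real (Suc N))"
      by (intro le_imp_inverse_le) auto
    moreover have "dist (y (r ?n)) l < e/2" using no by auto
    ultimately show ?thesis using N by (intro exI[of _ "r ?n"]) linarith
  qed
  have lF: "l \<in> F x"
  proof -
    have "l \<in> closure (F x)" unfolding closure_approachable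
    proof (intro allI impI)
      fix e :: real assume e: "e > 0"
      obtain n where n: "dist (y n) l < e/2" "inverse (real (Suc n)) < e/2" using key e by blast
      obtain \<delta> where "\<delta> > 0" and d: "\<forall>x'\<in>ball x \<delta>. \<exists>y'\<in>F x'. dist (y n) y' < inverse (real (Suc n))"
        using h by blast
      then obtain z where "z \<in> F x" "dist (y n) z < inverse (real (Suc n))" by force
      moreover have "dist z l \<le> dist (y n) z + dist (y n) l" by (metis dist_triangle dist_commute)
      ultimately show "\<exists>z\<in>F x. dist z l < e" using n by force
    qed
    then show ?thesis using cl by simp
  qed
  show ?thesis unfolding mv_continuous_at_def
  proof (intro bexI[OF _ lF] allI impI)
    fix e :: real assume e: "e > 0"
    obtain n where n: "dist (y n) l < e/2" "inverse (real (Suc n)) < e/2" using key e by blast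
    obtain \<delta> where d0: "\<delta> > 0" and d: "\<forall>x'\<in>ball x \<delta>. \<exists>y'\<in>F x'. dist (y n) y' < inverse (real (Suc n))"
      using h by blast
    have "\<forall>x'\<in>ball x \<delta>. \<exists>y'\<in>F x'. dist l y' < e"
    proof
      fix x' assume "x' \<in> ball x \<delta>"
      then obtain y' where "y' \<in> F x'" "dist (y n) y' < inverse (real (Suc n))" using d by blast
      moreover have "dist l y' \<le> dist (y n) l + dist (y n) y'" by (metis dist_triangle dist_commute)
      ultimately show "\<exists>y'\<in>F x'. dist l y' < e" using n by force
    qed
    then show "\<exists>\<delta>>0. \<forall>x'\<in>ball x \<delta>. \<exists>y'\<in>F x'. dist l y' < e" using d0 by blast
  qed
qed

lemma s2: "sigma0 2 = {\<Union>\<U> | \<U>. countable \<U> \<and> (\<forall>A\<in>\<U>. open (- A))}"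
  by (simp add: numeral_eq_Suc)

lemma s3: "sigma0 3 = {\<Union>\<U> | \<U>. countable \<U> \<and> (\<forall>A\<in>\<U>. \<exists>k\<in>{1..2}. - A \<in> sigma0 k)}"
proof -
  have e: "(3::nat) = Suc 2" by simp
  show ?thesis unfolding e by (subst sigma0.simps(2)) simp
qed

lemma gdelta: "(\<And>n::nat. open (U n)) \<Longrightarrow> - (\<Inter>n. U n) \<in> sigma0 2"
proof -
  assume o: "\<And>n. open (U n)"
  have "- (\<Inter>n. U n) = \<Union> (range (\<lambda>n. - U n))" by auto
  moreover have "countable (range (\<lambda>n. - U n))" by (rule countable_image) simp
  moreover have "\<forall>A\<in>range (\<lambda>n. - U n). open (- A)" using o by auto
  ultimately show ?thesis unfolding s2 by blast
qed

theorem corollary2p2: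
  fixes F :: "'a::metric_space \<Rightarrow> (real^'m) set"
  assumes total: "\<And>x. F x \<noteq> {}"
    and closed: "\<And>x. closed (F x)"
  shows "{x. mv_continuous_at F x} \<in> sigma0 3 \<and>
         ((\<forall>x. bounded (F x)) \<longrightarrow> {x. mv_continuous_at F x} \<in> pi0 2)"
proof
  let ?C = "{x. mv_continuous_at F x}"
  have eqa: "?C = \<Union> (range (\<lambda>k. \<Inter>n. apU F (cball 0 (real k)) n))"
  proof
    show "?C \<subseteq> \<Union> (range (\<lambda>k. \<Inter>n. apU F (cball 0 (real k)) n))"
    proof
      fix x assume "x \<in> ?C"
      then obtain y where y: "y \<in> F x" and h: "\<forall>\<epsilon>>0. \<exists>\<delta>>0. \<forall>x'\<in>ball x \<delta>. \<exists>y'\<in>F x'. dist y y' < \<epsilon>"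
        unfolding mv_continuous_at_def by blast
      obtain k where k: "norm y \<le> real k" using real_arch_simple by blast
      have "x \<in> apU F (cball 0 (real k)) n" for n
      proof -
        have "inverse (real (Suc n)) > 0" by simp
        moreover have "y \<in> cball 0 (real k)" using k by simp
        ultimately show ?thesis using h unfolding apU_def by blast
      qed
      then show "x \<in> \<Union> (range (\<lambda>k. \<Inter>n. apU F (cball 0 (real k)) n))" by blast
    qed
  next
    show "\<Union> (range (\<lambda>k. \<Inter>n. apU F (cball 0 (real k)) n)) \<subseteq> ?C"
    proof
      fix x assume "x \<in> \<Union> (range (\<lambda>k. \<Inter>n. apU F (cball 0 (real k)) n))"
      then obtain k where "\<And>n. x \<in> apU F (cball 0 (real k)) n" by blast
      hence "\<forall>n. \<exists>y\<in>cball 0 (real k). \<exists>\<delta>>0. \<forall>x'\<in>ball x \<delta>. \<exists>y'\<in>F x'. dist y y' < inverse (real (Suc n))"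
        unfolding apU_def by blast
      then obtain y where y: "\<And>n. y n \<in> cball 0 (real k)"
        and h: "\<And>n. \<exists>\<delta>>0. \<forall>x'\<in>ball x \<delta>. \<exists>y'\<in>F x'. dist (y n) y' < inverse (real (Suc n))"
        by metis
      have "bounded (range y)" using y by (meson bounded_cball bounded_subset image_subsetI)
      then show "x \<in> ?C" using core[OF h _ closed] by blast
    qed
  qed
  have "\<forall>A\<in>range (\<lambda>k. \<Inter>n. apU F (cball 0 (real k)) n). - A \<in> sigma0 2"
    using gdelta apU_open by blast
  then show "?C \<in> sigma0 3" unfolding s3 eqa
    by (intro CollectI exI[of _ "range (\<lambda>k. \<Inter>n. apU F (cball 0 (real k)) n)"] conjI refl) auto
next
  let ?C = "{x. mv_continuous_at F x}"
  show "(\<forall>x. bounded (F x)) \<longrightarrow> ?C \<in> pi0 2"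
  proof
    assume bF: "\<forall>x. bounded (F x)"
    have "?C = (\<Inter>n. apU F UNIV n)"
    proof
      show "?C \<subseteq> (\<Inter>n. apU F UNIV n)" using cont_sub_apU by blast
    next
      show "(\<Inter>n. apU F UNIV n) \<subseteq> ?C"
      proof
        fix x assume "x \<in> (\<Inter>n. apU F UNIV n)"
        hence "\<forall>n. \<exists>y. \<exists>\<delta>>0. \<forall>x'\<in>ball x \<delta>. \<exists>y'\<in>F x'. dist y y' < inverse (real (Suc n))"
          unfolding apU_def by blast
        then obtain y where
          h: "\<And>n. \<exists>\<delta>>0. \<forall>x'\<in>ball x \<delta>. \<exists>y'\<in>F x'. dist (y n) y' < inverse (real (Suc n))"
          by metis
        obtain B where B: "\<forall>z\<in>F x. norm z \<le> B" using bF bounded_iff by blast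
        have "norm (y n) \<le> B + 1" for n
        proof -
          obtain \<delta> where "\<delta> > 0" "\<forall>x'\<in>ball x \<delta>. \<exists>y'\<in>F x'. dist (y n) y' < inverse (real (Suc n))"
            using h by blast
          then obtain z where z: "z \<in> F x" "dist (y n) z < inverse (real (Suc n))" by force
          have "inverse (real (Suc n)) \<le> 1" by (simp add: inverse_le_1_iff)
          moreover have "norm (y n) \<le> norm z + dist (y n) z"
            by (metis dist_norm norm_triangle_sub add.commute)
          ultimately show ?thesis using z B by force
        qed
        hence "bounded (range y)" unfolding bounded_iff by blast
        then show "x \<in> ?C" using core[OF h _ closed] by blast
      qed
    qed
    then show "?C \<in> pi0 2" unfolding pi0_def using gdelta[of "apU F UNIV", OF apU_open] by simp
  qed
qed

end
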